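(* Let $G$ be an $\alpha_i$-metric graph ($i\ge 0$ an integer). Then for every vertex $v\in V\setminus C(G)$, $loc(v)\le i+1$.
   Context: All graphs $G=(V,E)$ are finite, connected, unweighted, undirected, simple; $d(u,v)$ is the shortest-path distance. $I(u,v)=\{x: d(u,x)+d(x,v)=d(u,v)\}$. A graph is $\alpha_i$-metric if for all vertices $u,v,w,x$: whenever $v\in I(u,w)$, $w\in I(v,x)$ and $v,w$ are adjacent, then $d(u,x)\ge d(u,v)+d(v,x)-i$. $e(v)=\max_u d(u,v)$, $rad(G)=\min_v e(v)$, $C(G)=\{v:e(v)=rad(G)\}$. For $v\notin C(G)$, the locality is $loc(v)=\min\{d(v,x): x\in V,\ e(x)<e(v)\}$. *)

theory Defs
  imports Main
begin

definition graph :: "'a set \<Rightarrow> ('a \<Rightarrow> 'a \<Rightarrow> bool) \<Rightarrow> bool" where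
  "graph V E \<longleftrightarrow> finite V \<and> V \<noteq> {} \<and>
     (\<forall>u v. E u v \<longrightarrow> u \<in> V \<and> v \<in> V) \<and>
     (\<forall>u v. E u v \<longrightarrow> E v u) \<and> (\<forall>v. \<not> E v v)"

definition walk_len :: "'a set \<Rightarrow> ('a \<Rightarrow> 'a \<Rightarrow> bool) \<Rightarrow> nat \<Rightarrow> 'a \<Rightarrow> 'a \<Rightarrow> bool" where
  "walk_len V E n u v \<longleftrightarrow> (\<exists>xs. length xs = Suc n \<and> xs ! 0 = u \<and> xs ! n = v \<and>
      set xs \<subseteq> V \<and> (\<forall>k<n. E (xs ! k) (xs ! Suc k)))"

definition connected_graph :: "'a set \<Rightarrow> ('a \<Rightarrow> 'a \<Rightarrow> bool) \<Rightarrow> bool" where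
  "connected_graph V E \<longleftrightarrow> graph V E \<and> (\<forall>u\<in>V. \<forall>v\<in>V. \<exists>n. walk_len V E n u v)"

definition gdist :: "'a set \<Rightarrow> ('a \<Rightarrow> 'a \<Rightarrow> bool) \<Rightarrow> 'a \<Rightarrow> 'a \<Rightarrow> nat" where
  "gdist V E u v = (LEAST n. walk_len V E n u v)"

definition interval :: "'a set \<Rightarrow> ('a \<Rightarrow> 'a \<Rightarrow> bool) \<Rightarrow> 'a \<Rightarrow> 'a \<Rightarrow> 'a set" where
  "interval V E u v = {x \<in> V. gdist V E u x + gdist V E x v = gdist V E u v}"

definition alpha_metric :: "nat \<Rightarrow> 'a set \<Rightarrow> ('a \<Rightarrow> 'a \<Rightarrow> bool) \<Rightarrow> bool" where
  "alpha_metric i V E \<longleftrightarrow> (\<forall>u\<in>V. \<forall>v\<in>V. \<forall>w\<in>V. \<forall>x\<in>V.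
      v \<in> interval V E u w \<and> w \<in> interval V E v x \<and> E v w \<longrightarrow>
      int (gdist V E u x) \<ge> int (gdist V E u v) + int (gdist V E v x) - int i)"

definition ecc :: "'a set \<Rightarrow> ('a \<Rightarrow> 'a \<Rightarrow> bool) \<Rightarrow> 'a \<Rightarrow> nat" where
  "ecc V E v = Max ((\<lambda>u. gdist V E u v) ` V)"

definition rad :: "'a set \<Rightarrow> ('a \<Rightarrow> 'a \<Rightarrow> bool) \<Rightarrow> nat" where
  "rad V E = Min (ecc V E ` V)"

definition center :: "'a set \<Rightarrow> ('a \<Rightarrow> 'a \<Rightarrow> bool) \<Rightarrow> 'a set" where
  "center V E = {v \<in> V. ecc V E v = rad V E}"

definition loc :: "'a set \<Rightarrow> ('a \<Rightarrow> 'a \<Rightarrow> bool) \<Rightarrow> 'a \<Rightarrow> nat" where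
  "loc V E v = Min {gdist V E v x | x. x \<in> V \<and> ecc V E x < ecc V E v}"

end

theory Submission
  imports Defs
begin

lemma walk_zero: "walk_len V E 0 u v \<longleftrightarrow> u = v \<and> u \<in> V"
  unfolding walk_len_def
proof
  assume "\<exists>xs. length xs = Suc 0 \<and> xs ! 0 = u \<and> xs ! 0 = v \<and> set xs \<subseteq> V \<and> (\<forall>k<0. E (xs ! k) (xs ! Suc k))"
  then obtain xs where "length xs = Suc 0" "xs ! 0 = u" "xs ! 0 = v" "set xs \<subseteq> V" by blast
  then show "u = v \<and> u \<in> V" by (metis nth_mem subsetD zero_less_Suc)
next
  assume "u = v \<and> u \<in> V"
  then show "\<exists>xs. length xs = Suc 0 \<and> xs ! 0 = u \<and> xs ! 0 = v \<and> set xs \<subseteq> V \<and> (\<forall>k<0. E (xs ! k) (xs ! Suc k))"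
    by (intro exI[of _ "[u]"]) auto
qed

lemma walk_snoc: "walk_len V E (Suc n) u w \<longleftrightarrow> (\<exists>v. walk_len V E n u v \<and> E v w \<and> w \<in> V)"
proof
  assume "walk_len V E (Suc n) u w"
  then obtain xs where xs: "length xs = Suc (Suc n)" "xs ! 0 = u" "xs ! Suc n = w" "set xs \<subseteq> V"
    "\<forall>k<Suc n. E (xs ! k) (xs ! Suc k)" unfolding walk_len_def by blast
  let ?ys = "butlast xs"
  have l: "length ?ys = Suc n" using xs by simp
  have nth: "\<And>k. k < Suc n \<Longrightarrow> ?ys ! k = xs ! k" using xs by (simp add: nth_butlast)
  have "walk_len V E n u (xs ! n)"
    unfolding walk_len_def
    apply (rule exI[of _ ?ys])
    using xs l nth by (auto dest: in_set_butlastD)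
  moreover have "w \<in> V" using xs by (metis lessI nth_mem subsetD)
  ultimately show "\<exists>v. walk_len V E n u v \<and> E v w \<and> w \<in> V" using xs by blast
next
  assume "\<exists>v. walk_len V E n u v \<and> E v w \<and> w \<in> V"
  then obtain v xs where xs: "length xs = Suc n" "xs ! 0 = u" "xs ! n = v" "set xs \<subseteq> V"
    "\<forall>k<n. E (xs ! k) (xs ! Suc k)" and e: "E v w" "w \<in> V" unfolding walk_len_def by blast
  show "walk_len V E (Suc n) u w"
    unfolding walk_len_def
  proof (rule exI[of _ "xs @ [w]"], intro conjI allI impI)
    fix k assume k: "k < Suc n"
    show "E ((xs @ [w]) ! k) ((xs @ [w]) ! Suc k)"
    proof (cases "k < n")
      case True then show ?thesis using xs by (simp add: nth_append)
    next
      case False then have "k = n" using k by simp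
      then show ?thesis using xs e by (simp add: nth_append)
    qed
  qed (use xs e in \<open>auto simp: nth_append\<close>)
qed

lemma walk_cons: "walk_len V E (Suc n) u w \<longleftrightarrow> (\<exists>v. E u v \<and> u \<in> V \<and> walk_len V E n v w)"
proof
  assume "walk_len V E (Suc n) u w"
  then obtain xs where xs: "length xs = Suc (Suc n)" "xs ! 0 = u" "xs ! Suc n = w" "set xs \<subseteq> V"
    "\<forall>k<Suc n. E (xs ! k) (xs ! Suc k)" unfolding walk_len_def by blast
  have "walk_len V E n (xs ! 1) w"
    unfolding walk_len_def
    apply (rule exI[of _ "tl xs"])
    using xs by (auto simp: nth_tl) (metis list.sel(2) list.set_sel(2) subsetD tl_Nil)
  moreover have "u \<in> V" using xs by (metis zero_less_Suc nth_mem subsetD)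
  ultimately show "\<exists>v. E u v \<and> u \<in> V \<and> walk_len V E n v w" using xs by force
next
  assume "\<exists>v. E u v \<and> u \<in> V \<and> walk_len V E n v w"
  then obtain v xs where xs: "length xs = Suc n" "xs ! 0 = v" "xs ! n = w" "set xs \<subseteq> V"
    "\<forall>k<n. E (xs ! k) (xs ! Suc k)" and e: "E u v" "u \<in> V" unfolding walk_len_def by blast
  show "walk_len V E (Suc n) u w"
    unfolding walk_len_def
  proof (rule exI[of _ "u # xs"], intro conjI allI impI)
    fix k assume k: "k < Suc n"
    show "E ((u # xs) ! k) ((u # xs) ! Suc k)"
      using xs e k by (cases k) auto
  qed (use xs e in auto)
qed

lemma walk_app: "walk_len V E n v w \<Longrightarrow> walk_len V E m u v \<Longrightarrow> walk_len V E (m + n) u w"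
proof (induction n arbitrary: w)
  case 0 then show ?case by (simp add: walk_zero)
next
  case (Suc n)
  then obtain v' where "walk_len V E n v v'" "E v' w" "w \<in> V" by (auto simp: walk_snoc)
  with Suc show ?case by (auto simp: walk_snoc)
qed

lemma walk_sym:
  assumes sym: "\<And>a b. E a b \<Longrightarrow> E b a"
  shows "walk_len V E n u v \<Longrightarrow> walk_len V E n v u"
proof (induction n arbitrary: u)
  case 0 then show ?case by (auto simp add: walk_zero)
next
  case (Suc n)
  then obtain v' where "E u v'" "u \<in> V" "walk_len V E n v' v" by (auto simp: walk_cons)
  with Suc sym show ?case by (auto simp: walk_snoc)
qed

lemma walk_in: "walk_len V E n u v \<Longrightarrow> u \<in> V \<and> v \<in> V"
  unfolding walk_len_def by (metis lessI nth_mem subsetD zero_less_Suc)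

context
  fixes V :: "'a set" and E :: "'a \<Rightarrow> 'a \<Rightarrow> bool"
  assumes cg: "connected_graph V E"
begin

lemma gd_walk: "u \<in> V \<Longrightarrow> v \<in> V \<Longrightarrow> walk_len V E (gdist V E u v) u v"
  using cg unfolding connected_graph_def gdist_def by (meson LeastI)

lemma gd_le: "walk_len V E n u v \<Longrightarrow> gdist V E u v \<le> n"
  unfolding gdist_def by (rule Least_le)

lemma gd_sym: "u \<in> V \<Longrightarrow> v \<in> V \<Longrightarrow> gdist V E u v = gdist V E v u"
proof -
  assume a: "u \<in> V" "v \<in> V"
  have sym: "\<And>a b. E a b \<Longrightarrow> E b a" using cg unfolding connected_graph_def graph_def by blast
  show ?thesis
    using gd_le[OF walk_sym[OF sym gd_walk[OF a]]] gd_le[OF walk_sym[OF sym gd_walk[OF a(2,1)]]]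
    by simp
qed

lemma gd_tri: "u \<in> V \<Longrightarrow> v \<in> V \<Longrightarrow> w \<in> V \<Longrightarrow> gdist V E u w \<le> gdist V E u v + gdist V E v w"
  by (meson gd_le gd_walk walk_app)

lemma gd_edge: "E a b \<Longrightarrow> gdist V E a b \<le> 1"
proof -
  assume e: "E a b"
  have "a \<in> V" "b \<in> V" using cg e unfolding connected_graph_def graph_def by blast+
  with e have "walk_len V E 1 a b" by (auto simp: walk_snoc walk_zero)
  then show ?thesis by (rule gd_le)
qed

lemma gd_zero: "u \<in> V \<Longrightarrow> v \<in> V \<Longrightarrow> gdist V E u v = 0 \<Longrightarrow> u = v"
  using gd_walk walk_zero by metis

lemma gd_pred: "u \<in> V \<Longrightarrow> x \<in> V \<Longrightarrow> gdist V E u x = Suc k \<Longrightarrow>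
   \<exists>y\<in>V. E y x \<and> gdist V E u y = k"
proof -
  assume a: "u \<in> V" "x \<in> V" "gdist V E u x = Suc k"
  then have "walk_len V E (Suc k) u x" using gd_walk by metis
  then obtain y where y: "walk_len V E k u y" "E y x" by (auto simp: walk_snoc)
  have yV: "y \<in> V" using walk_in[OF y(1)] by blast
  have "gdist V E u y \<le> k" using gd_le[OF y(1)] .
  moreover have "gdist V E u x \<le> gdist V E u y + gdist V E y x" using gd_tri a yV by blast
  ultimately have "gdist V E u y = k" using gd_edge[OF y(2)] a by linarith
  then show ?thesis using yV y by blast
qed

lemma finV: "finite V" "V \<noteq> {}" using cg unfolding connected_graph_def graph_def by blast+

lemma ecc_ge: "u \<in> V \<Longrightarrow> gdist V E u y \<le> ecc V E y"
  unfolding ecc_def using finV by (intro Max_ge) auto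

lemma ecc_att: "\<exists>u\<in>V. gdist V E u y = ecc V E y"
proof -
  have "ecc V E y \<in> (\<lambda>u. gdist V E u y) ` V" unfolding ecc_def using finV by (intro Max_in) auto
  then show ?thesis by auto
qed

end

theorem lemma7:
  fixes V :: "'a set" and E :: "'a \<Rightarrow> 'a \<Rightarrow> bool" and i :: nat and v :: 'a
  assumes "connected_graph V E"
    and "alpha_metric i V E"
    and "v \<in> V" and "v \<notin> center V E"
  shows "loc V E v \<le> i + 1"
proof -
  note cg = assms(1)
  have fin: "finite V" "V \<noteq> {}" using finV[OF cg] by auto
  have "rad V E \<in> ecc V E ` V" unfolding rad_def using fin by (intro Min_in) auto
  then obtain c where c: "c \<in> V" "ecc V E c = rad V E" by auto
  have "rad V E \<le> ecc V E v" unfolding rad_def using fin assms(3) by (intro Min_le) auto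
  with assms(3,4) c have cv: "ecc V E c < ecc V E v" unfolding center_def by auto
  define S where "S = {gdist V E v x | x. x \<in> V \<and> ecc V E x < ecc V E v}"
  have Sfin: "finite S" unfolding S_def using fin(1) by auto
  have Sne: "S \<noteq> {}" unfolding S_def using c cv by auto
  have "loc V E v \<in> S" unfolding loc_def S_def[symmetric] using Sfin Sne by (rule Min_in)
  then obtain x where x: "x \<in> V" "ecc V E x < ecc V E v" "gdist V E v x = loc V E v"
    unfolding S_def by auto
  have minx: "\<And>x'. x' \<in> V \<Longrightarrow> ecc V E x' < ecc V E v \<Longrightarrow> loc V E v \<le> gdist V E v x'"
    unfolding loc_def S_def[symmetric] using Sfin by (intro Min_le) (auto simp: S_def)
  show ?thesis
  proof (rule ccontr)
    assume "\<not> ?thesis"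
    then obtain k where k: "gdist V E v x = Suc k" "k \<ge> i + 1" using x(3)
      by (metis Suc_le_D not_less_eq_eq)
    obtain y where y: "y \<in> V" "E y x" "gdist V E v y = k" using gd_pred[OF cg assms(3) x(1) k(1)] by blast
    have ey: "ecc V E y \<ge> ecc V E v"
    proof (rule ccontr)
      assume "\<not> ?thesis"
      then have "loc V E v \<le> k" using minx[OF y(1)] y(3) by simp
      then show False using x(3) k by simp
    qed
    obtain u where u: "u \<in> V" "gdist V E u y = ecc V E y" using ecc_att[OF cg] by blast
    have ux: "gdist V E u x \<le> ecc V E x" using ecc_ge[OF cg u(1)] .
    have uy: "gdist V E u y \<le> gdist V E u x + gdist V E x y" using gd_tri[OF cg u(1) x(1) y(1)] .
    have xy: "gdist V E x y \<le> 1" using gd_edge[OF cg] y(2) gd_sym[OF cg x(1) y(1)] by simp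
    have yx_ne: "gdist V E y x \<noteq> 0" using gd_zero[OF cg y(1) x(1)] k y(3) by fastforce
    have yx: "gdist V E y x = 1" using xy yx_ne gd_sym[OF cg x(1) y(1)] by simp
    have uy_eq: "gdist V E u y = ecc V E v" using uy ux xy x(2) ey u(2) by linarith
    have ux_eq: "gdist V E u x + 1 = ecc V E v" using uy ux xy x(2) ey u(2) by linarith
    have I1: "y \<in> interval V E v x" unfolding interval_def using y yx k by simp
    have I2: "x \<in> interval V E y u" unfolding interval_def using x(1) yx ux_eq uy_eq
      gd_sym[OF cg u(1) x(1)] gd_sym[OF cg u(1) y(1)] by simp
    have "int (gdist V E v u) \<ge> int (gdist V E v y) + int (gdist V E y u) - int i"
      using assms(2) unfolding alpha_metric_def using assms(3) y(1) x(1) u(1) I1 I2 y(2) by blast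
    moreover have "gdist V E v u \<le> ecc V E v" using ecc_ge[OF cg u(1), of v] gd_sym[OF cg u(1) assms(3)] by simp
    ultimately show False using y(3) uy_eq gd_sym[OF cg u(1) y(1)] k by linarith
  qed
qed

end
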